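(* Let $\Psi:\Omega_N\to\Omega_N$ be a mixed unitary channel, i.e. $\Psi(\rho)=\sum_i p_iU_i\rho U_i^\dagger$ with $U_i\in\mathrm U(N)$, $p_i\ge0$ and $\sum_ip_i=1$. Then for all $\rho^A,\rho^B\in\Omega_N$, $$T^Q(\Psi(\rho^A),\Psi(\rho^B))\le T^Q(\rho^A,\rho^B).$$
   Context: $\Omega_N$ is the set of $N\times N$ density matrices (Hermitian, positive semidefinite, trace one). Let $S$ be the swap operator on $\mathbb{C}^N\otimes\mathbb{C}^N$, and let $C^Q=\tfrac12(\mathbb{1}-S)$. Let $\Gamma^Q(\rho^A,\rho^B)$ be the set of density matrices $\rho^{AB}$ on $\mathbb{C}^N\otimes\mathbb{C}^N$ with $\operatorname{Tr}_B\rho^{AB}=\rho^A$ and $\operatorname{Tr}_A\rho^{AB}=\rho^B$. Define $$T^Q(\rho^A,\rho^B)=\min_{\rho^{AB}\in\Gamma^Q(\rho^A,\rho^B)}\operatorname{Tr}(C^Q\rho^{AB}).$$ *)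

theory Defs
  imports "HOL-Analysis.Analysis"
begin

text \<open>Complex N x N matrices are represented as complex^'n^'n with a finite index type 'n
  (N = CARD('n)); operators on C^N (x) C^N are indexed by the product type 'n \<times> 'n.\<close>

definition cadj :: "complex^'m^'n \<Rightarrow> complex^'n^'m" where
  "cadj A = (\<chi> i j. cnj (A $ j $ i))"

definition hermitian_mat :: "complex^'n^'n \<Rightarrow> bool" where
  "hermitian_mat A \<longleftrightarrow> cadj A = A"

definition psd_mat :: "complex^'n^'n \<Rightarrow> bool" where
  "psd_mat A \<longleftrightarrow> hermitian_mat A \<and>
     (\<forall>v::complex^'n. 0 \<le> Re (\<Sum>i\<in>UNIV. cnj (v $ i) * (A *v v) $ i))"

definition density_mat :: "complex^'n^'n \<Rightarrow> bool" where
  "density_mat A \<longleftrightarrow> psd_mat A \<and> trace A = 1"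

definition unitary_mat :: "complex^'n^'n \<Rightarrow> bool" where
  "unitary_mat U \<longleftrightarrow> cadj U ** U = mat 1"

definition ptrace_B :: "complex^('n::finite \<times> 'n::finite)^('n::finite \<times> 'n::finite) \<Rightarrow> complex^'n^'n" where
  "ptrace_B r = (\<chi> i j. \<Sum>k\<in>UNIV. r $ (i, k) $ (j, k))"

definition ptrace_A :: "complex^('n::finite \<times> 'n::finite)^('n::finite \<times> 'n::finite) \<Rightarrow> complex^'n^'n" where
  "ptrace_A r = (\<chi> i j. \<Sum>k\<in>UNIV. r $ (k, i) $ (k, j))"

definition swap_op :: "complex^('n::finite \<times> 'n::finite)^('n::finite \<times> 'n::finite)" where
  "swap_op = (\<chi> x y. if fst x = snd y \<and> snd x = fst y then 1 else 0)"

definition CQ :: "complex^('n::finite \<times> 'n::finite)^('n::finite \<times> 'n::finite)" where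
  "CQ = (\<chi> x y. ((mat 1 :: complex^('n::finite \<times> 'n::finite)^('n::finite \<times> 'n::finite)) $ x $ y - swap_op $ x $ y) / 2)"

definition GammaQ :: "complex^'n^'n \<Rightarrow> complex^'n^'n \<Rightarrow> (complex^('n::finite \<times> 'n::finite)^('n::finite \<times> 'n::finite)) set" where
  "GammaQ rA rB = {r. density_mat r \<and> ptrace_B r = rA \<and> ptrace_A r = rB}"

text \<open>The minimum is rendered as the infimum (it is attained by compactness).
  Tr(C^Q r) is real for Hermitian r; we take its real part.\<close>
definition TQ :: "complex^'n^'n \<Rightarrow> complex^'n^'n \<Rightarrow> real" where
  "TQ rA rB = Inf ((\<lambda>r. Re (trace (CQ ** r))) ` GammaQ rA rB)"

definition mixed_unitary_channel :: "(complex^'n^'n \<Rightarrow> complex^'n^'n) \<Rightarrow> bool" where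
  "mixed_unitary_channel \<Psi> \<longleftrightarrow>
     (\<exists>(k::nat) (p::nat \<Rightarrow> real) (U::nat \<Rightarrow> complex^'n^'n).
        (\<forall>i<k. 0 \<le> p i \<and> unitary_mat (U i)) \<and> (\<Sum>i<k. p i) = 1 \<and>
        (\<forall>\<rho>. \<Psi> \<rho> = (\<Sum>i<k. p i *\<^sub>R (U i ** \<rho> ** cadj (U i)))))"

end

theory Submission
  imports Defs
begin


definition qf :: "'a set \<Rightarrow> ('a\<Rightarrow>'a\<Rightarrow>complex) \<Rightarrow> ('a\<Rightarrow>complex) \<Rightarrow> complex" where
  "qf S B v = (\<Sum>k\<in>S. \<Sum>l\<in>S. cnj (v k) * B k l * v l)"
definition psd_on where "psd_on S B \<longleftrightarrow> (\<forall>v. 0 \<le> Re (qf S B v))"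
definition herm_on where "herm_on S B \<longleftrightarrow> (\<forall>k\<in>S. \<forall>l\<in>S. B l k = cnj (B k l))"

lemma qf_shift:
  assumes "finite S" "k0 \<in> S"
  shows "qf S B (\<lambda>k. v k + (if k = k0 then t else 0)) = qf S B v
     + cnj t * (\<Sum>l\<in>S. B k0 l * v l) + t * (\<Sum>k\<in>S. cnj (v k) * B k k0) + cnj t * t * B k0 k0"
proof -
  have "qf S B (\<lambda>k. v k + (if k = k0 then t else 0)) =
    (\<Sum>k\<in>S. \<Sum>l\<in>S. cnj (v k) * B k l * v l + (if k = k0 then cnj t * B k0 l * v l else 0)
       + (if l = k0 then cnj (v k) * B k k0 * t else 0) + (if k = k0 \<and> l = k0 then cnj t * B k0 k0 * t else 0))"
    unfolding qf_def by (rule sum.cong, simp, rule sum.cong, auto simp: algebra_simps)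
  also have "\<dots> = qf S B v + cnj t * (\<Sum>l\<in>S. B k0 l * v l) + t * (\<Sum>k\<in>S. cnj (v k) * B k k0) + cnj t * t * B k0 k0"
  proof -
    have e1: "(\<Sum>k\<in>S. \<Sum>l\<in>S. (if k = k0 then cnj t * B k0 l * v l else 0)) = cnj t * (\<Sum>l\<in>S. B k0 l * v l)"
    proof -
      have "\<And>k. (\<Sum>l\<in>S. (if k = k0 then cnj t * B k0 l * v l else 0)) = (if k = k0 then (\<Sum>l\<in>S. cnj t * B k0 l * v l) else 0)" by simp
      then show ?thesis using assms by (simp add: sum_distrib_left mult.assoc)
    qed
    have e2: "(\<Sum>k\<in>S. \<Sum>l\<in>S. (if l = k0 then cnj (v k) * B k k0 * t else 0)) = t * (\<Sum>k\<in>S. cnj (v k) * B k k0)"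
      using assms by (simp add: sum_distrib_left mult.commute mult.left_commute)
    have e3: "(\<Sum>k\<in>S. \<Sum>l\<in>S. (if k = k0 \<and> l = k0 then cnj t * B k0 k0 * t else 0)) = cnj t * t * B k0 k0"
    proof -
      have "\<And>k. (\<Sum>l\<in>S. (if k = k0 \<and> l = k0 then cnj t * B k0 k0 * t else 0)) = (if k = k0 then cnj t * B k0 k0 * t else 0)" 
        using assms by (simp add: sum.delta')
      then show ?thesis using assms by (simp add: mult_ac)
    qed
    show ?thesis unfolding sum.distrib qf_def e1 e2 e3 ..
  qed
  finally show ?thesis .
qed

lemma herm_diag_real: "herm_on S B \<Longrightarrow> k \<in> S \<Longrightarrow> B k k = complex_of_real (Re (B k k))"
proof -
  assume h: "herm_on S B" "k \<in> S"
  then have e: "B k k = cnj (B k k)" unfolding herm_on_def by blast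
  have "Im (B k k) = Im (cnj (B k k))" using e by (rule arg_cong)
  then have "Im (B k k) = 0" by simp
  then show ?thesis by (simp add: complex_eq_iff)
qed

lemma herm_row: assumes "herm_on S B" "k0 \<in> S"
  shows "(\<Sum>l\<in>S. B k0 l * v l) = cnj (\<Sum>k\<in>S. cnj (v k) * B k k0)"
proof -
  have "\<And>l. l \<in> S \<Longrightarrow> B k0 l * v l = cnj (cnj (v l) * B l k0)"
  proof -
    fix l assume l: "l \<in> S"
    have "B k0 l = cnj (B l k0)" using assms l unfolding herm_on_def by blast
    then show "B k0 l * v l = cnj (cnj (v l) * B l k0)" by (simp add: mult.commute)
  qed
  then show ?thesis unfolding cnj_sum by (intro sum.cong) auto
qed

lemma cs_ineq:
  fixes q b zz :: real
  assumes "\<And>s. 0 \<le> q - 2 * s * zz + s^2 * zz * b" "0 \<le> b" "0 \<le> zz"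
  shows "zz \<le> q * b"
proof (cases "b > 0")
  case True
  have "0 \<le> q - 2 * (1/b) * zz + (1/b)^2 * zz * b" by (rule assms(1))
  also have "\<dots> = q - zz / b" using True by (simp add: field_simps power2_eq_square)
  finally show ?thesis using True by (simp add: field_simps)
next
  case False
  then have b0: "b = 0" using assms by simp
  show ?thesis
  proof (rule ccontr)
    assume "\<not> zz \<le> q * b"
    then have cp: "zz > 0" using b0 by simp
    have "0 \<le> q - 2 * ((q+1)/(2*zz)) * zz + ((q+1)/(2*zz))^2 * zz * b" by (rule assms(1))
    then show False using b0 cp by (simp add: field_simps)
  qed
qed

lemma cs_lemma:
  assumes "finite S" "k0 \<in> S" "herm_on S B" "psd_on S B"
  shows "(cmod (\<Sum>k\<in>S. cnj (v k) * B k k0))^2 \<le> Re (qf S B v) * Re (B k0 k0)"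
proof -
  define c where "c = (\<Sum>k\<in>S. cnj (v k) * B k k0)"
  define b where "b = Re (B k0 k0)"
  have bb: "B k0 k0 = complex_of_real b" using herm_diag_real[OF assms(3,2)] b_def by simp
  have b0: "0 \<le> b"
  proof -
    have "0 \<le> Re (qf S B (\<lambda>k. 0 + (if k = k0 then 1 else 0)))" using assms(4) psd_on_def by blast
    also have "\<dots> = b" using qf_shift[OF assms(1,2), of B "\<lambda>k. 0" 1] bb by (simp add: qf_def)
    finally show ?thesis .
  qed
  have "\<And>s. 0 \<le> Re (qf S B v) - 2 * s * (cmod c)^2 + s^2 * (cmod c)^2 * b"
  proof -
    fix s :: real
    define t where "t = - complex_of_real s * cnj c"
    have e1: "cnj t * cnj c + t * c = - complex_of_real (2 * s * (cmod c)^2)"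
      unfolding t_def cmod_power2 by (simp add: complex_eq_iff power2_eq_square algebra_simps)
    have e2: "cnj t * t * complex_of_real b = complex_of_real (s^2 * (cmod c)^2 * b)"
      unfolding t_def cmod_power2 by (simp add: complex_eq_iff power2_eq_square algebra_simps)
    have "0 \<le> Re (qf S B (\<lambda>k. v k + (if k = k0 then t else 0)))" using assms(4) psd_on_def by blast
    also have "\<dots> = Re (qf S B v + (cnj t * cnj c + t * c) + cnj t * t * complex_of_real b)"
      using qf_shift[OF assms(1,2), of B v t] herm_row[OF assms(3,2), of v] bb c_def by (simp add: add.assoc)
    also have "\<dots> = Re (qf S B v) - 2 * s * (cmod c)^2 + s^2 * (cmod c)^2 * b"
      unfolding e1 e2 by simp
    finally show "0 \<le> Re (qf S B v) - 2 * s * (cmod c)^2 + s^2 * (cmod c)^2 * b" .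
  qed
  moreover have "0 \<le> Re (qf S B v)" using assms(4) psd_on_def by blast
  ultimately show ?thesis using cs_ineq[of "Re (qf S B v)" "(cmod c)^2" b] b0 unfolding c_def b_def by simp
qed


lemma sum_if_subset: "finite T \<Longrightarrow> S \<subseteq> T \<Longrightarrow> (\<Sum>x\<in>T. if x \<in> S then g x else 0) = sum g S"
  by (rule sum.mono_neutral_cong_right) auto

lemma psd_restrict:
  fixes B :: "'a \<Rightarrow> 'a \<Rightarrow> complex"
  assumes "finite T" "S \<subseteq> T" "psd_on T B"
  shows "psd_on S B"
  unfolding psd_on_def
proof
  fix v :: "'a \<Rightarrow> complex"
  define v' where "v' = (\<lambda>k. if k \<in> S then v k else 0)"
  have "qf T B v' = (\<Sum>k\<in>T. if k \<in> S then (\<Sum>l\<in>T. if l \<in> S then cnj (v k) * B k l * v l else 0) else 0)"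
    unfolding qf_def v'_def by (intro sum.cong refl) (auto intro!: sum.cong)
  also have "\<dots> = (\<Sum>k\<in>S. (\<Sum>l\<in>T. if l \<in> S then cnj (v k) * B k l * v l else 0))"
    using assms(1,2) by (rule sum_if_subset)
  also have "\<dots> = qf S B v"
    unfolding qf_def using assms(1,2) by (simp add: sum_if_subset)
  finally show "0 \<le> Re (qf S B v)" using assms(3) unfolding psd_on_def by metis
qed

lemma herm_restrict: "herm_on T B \<Longrightarrow> S \<subseteq> T \<Longrightarrow> herm_on S B"
  unfolding herm_on_def by blast

definition EE :: "'a set \<Rightarrow> 'b set \<Rightarrow> ('a \<Rightarrow> 'b \<Rightarrow> complex) \<Rightarrow> ('a \<Rightarrow> 'a \<Rightarrow> complex) \<Rightarrow> ('b \<Rightarrow> 'b \<Rightarrow> complex) \<Rightarrow> complex" where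
  "EE I S V A B = (\<Sum>i\<in>I. \<Sum>j\<in>I. \<Sum>k\<in>S. \<Sum>l\<in>S. cnj (V i k) * A i j * B k l * V j l)"

lemma EE_add: "EE I S V A (\<lambda>k l. B1 k l + B2 k l) = EE I S V A B1 + EE I S V A B2"
  unfolding EE_def by (simp add: algebra_simps sum.distrib)

lemma EE_insert:
  assumes "finite S" "k0 \<notin> S" "\<forall>l\<in>insert k0 S. B k0 l = 0 \<and> B l k0 = 0"
  shows "EE I (insert k0 S) V A B = EE I S V A B"
  unfolding EE_def using assms by (simp add: sum.insert)

lemma EE_rank1:
  "EE I S V A (\<lambda>k l. w k * cnj (w l)) = qf I A (\<lambda>i. \<Sum>l\<in>S. V i l * cnj (w l))"
  unfolding EE_def qf_def
  by (intro sum.cong refl) (simp add: cnj_sum sum_distrib_left sum_distrib_right mult_ac)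


lemma tensor_aux:
  fixes A :: "'a \<Rightarrow> 'a \<Rightarrow> complex" and S :: "'b set"
  assumes I: "finite I" and Apsd: "psd_on I A" and S: "finite S"
  shows "herm_on S B \<Longrightarrow> psd_on S B \<Longrightarrow> 0 \<le> Re (EE I S V A B)"
  using S
proof (induction S arbitrary: B rule: finite_induct)
  case empty
  then show ?case by (simp add: EE_def)
next
  case (insert k0 S)
  define T where "T = insert k0 S"
  have fT: "finite T" "k0 \<in> T" "S \<subseteq> T" using insert T_def by auto
  have hT: "herm_on T B" "psd_on T B" using insert T_def by auto
  define b where "b = Re (B k0 k0)"
  have bb: "B k0 k0 = complex_of_real b" using herm_diag_real[OF hT(1) fT(2)] b_def by simp
  have b0: "0 \<le> b"
  proof -
    have "0 \<le> Re (qf T B (\<lambda>k. 0 + (if k = k0 then 1 else 0)))" using hT(2) psd_on_def by blast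
    also have "\<dots> = b" using qf_shift[OF fT(1,2), of B "\<lambda>k. 0" 1] bb by (simp add: qf_def)
    finally show ?thesis .
  qed
  show ?case
  proof (cases "b = 0")
    case True
    have z: "B l k0 = 0 \<and> B k0 l = 0" if l: "l \<in> T" for l
    proof -
      have "(cmod (\<Sum>k\<in>T. cnj (if k = l then 1 else 0) * B k k0))^2 \<le> Re (qf T B (\<lambda>k. if k = l then 1 else 0)) * b"
        using cs_lemma[OF fT(1,2) hT, where v="\<lambda>k. if k = l then 1 else 0"] unfolding b_def .
      also have "\<dots> = 0" using True by simp
      finally have "(cmod (\<Sum>k\<in>T. cnj (if k = l then 1 else 0) * B k k0))^2 \<le> 0" .
      moreover have "(\<Sum>k\<in>T. cnj (if k = l then 1 else 0) * B k k0) = B l k0"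
      proof -
        have "\<And>k. cnj (if k = l then 1 else 0) * B k k0 = (if k = l then B l k0 else 0)" by simp
        then show ?thesis using l fT(1) by (simp only:) (simp add: sum.delta')
      qed
      ultimately have "B l k0 = 0" by simp
      moreover have "B k0 l = cnj (B l k0)" using hT(1) l fT(2) unfolding herm_on_def by blast
      ultimately show ?thesis by simp
    qed
    have "EE I (insert k0 S) V A B = EE I S V A B"
      using EE_insert[OF insert(1,2)] z T_def by blast
    moreover have "0 \<le> Re (EE I S V A B)"
      using insert.IH herm_restrict[OF hT(1) fT(3)] psd_restrict[OF fT(1) fT(3) hT(2)] by blast
    ultimately show ?thesis by simp
  next
    case False
    then have bp: "b > 0" using b0 by simp
    define w where "w k = B k k0 / complex_of_real (sqrt b)" for k
    define B' where "B' k l = B k l - w k * cnj (w l)" for k l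
    have BB: "B = (\<lambda>k l. B' k l + w k * cnj (w l))" unfolding B'_def by simp
    have sb: "complex_of_real (sqrt b) * complex_of_real (sqrt b) = complex_of_real b"
    proof -
      have "sqrt b * sqrt b = b" using b0 by simp
      then show ?thesis by (simp only: of_real_mult[symmetric])
    qed
    have sb0: "complex_of_real (sqrt b) \<noteq> 0" using bp by simp
    have z: "B' l k0 = 0 \<and> B' k0 l = 0" if l: "l \<in> T" for l
    proof -
      have hl: "B k0 l = cnj (B l k0)" using hT(1) l fT(2) unfolding herm_on_def by blast
      have "B' l k0 = B l k0 - B l k0 * cnj (B k0 k0) / (complex_of_real (sqrt b) * complex_of_real (sqrt b))"
        unfolding B'_def w_def by (simp add: field_simps)
      also have "\<dots> = 0" using sb sb0 bb by (simp add: field_simps)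
      finally have 1: "B' l k0 = 0" .
      have "B' k0 l = B k0 l - B k0 k0 * cnj (B l k0) / (complex_of_real (sqrt b) * complex_of_real (sqrt b))"
        unfolding B'_def w_def by (simp add: field_simps)
      also have "\<dots> = 0" using sb sb0 bb hl by (simp add: field_simps)
      finally show ?thesis using 1 by simp
    qed
    have hB': "herm_on T B'"
      unfolding herm_on_def
    proof (intro ballI)
      fix k l assume "k \<in> T" "l \<in> T"
      then have e: "B l k = cnj (B k l)" using hT(1) unfolding herm_on_def by blast
      show "B' l k = cnj (B' k l)" unfolding B'_def e by (simp add: mult.commute)
    qed
    have pB': "psd_on T B'"
      unfolding psd_on_def
    proof
      fix v :: "'b \<Rightarrow> complex"
      define c where "c = (\<Sum>k\<in>T. cnj (v k) * B k k0)"
      have cs: "(cmod c)^2 \<le> Re (qf T B v) * b" using cs_lemma[OF fT(1,2) hT, where v=v] unfolding c_def b_def .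
      have q1: "qf T B' v = qf T B v - qf T (\<lambda>k l. w k * cnj (w l)) v"
        unfolding qf_def B'_def by (simp add: algebra_simps sum_subtractf)
      have "qf T (\<lambda>k l. w k * cnj (w l)) v = (\<Sum>k\<in>T. cnj (v k) * w k) * cnj (\<Sum>l\<in>T. cnj (v l) * w l)"
        unfolding qf_def by (simp add: cnj_sum sum_distrib_left sum_distrib_right mult_ac)
      also have "(\<Sum>k\<in>T. cnj (v k) * w k) = c / complex_of_real (sqrt b)"
        unfolding c_def w_def by (simp add: sum_divide_distrib)
      also have "c / complex_of_real (sqrt b) * cnj (c / complex_of_real (sqrt b)) = complex_of_real ((cmod c)^2 / b)"
      proof -
        have "c / complex_of_real (sqrt b) * cnj (c / complex_of_real (sqrt b)) = (c * cnj c) / (complex_of_real (sqrt b) * complex_of_real (sqrt b))"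
          by simp
        also have "\<dots> = complex_of_real ((cmod c)^2) / complex_of_real b" unfolding sb complex_norm_square ..
        finally show ?thesis by simp
      qed
      finally have "Re (qf T B' v) = Re (qf T B v) - (cmod c)^2 / b" using q1 by simp
      moreover have "(cmod c)^2 / b \<le> Re (qf T B v)" using cs bp by (simp add: divide_le_eq)
      ultimately show "0 \<le> Re (qf T B' v)" by simp
    qed
    have "EE I (insert k0 S) V A B = EE I (insert k0 S) V A B' + EE I (insert k0 S) V A (\<lambda>k l. w k * cnj (w l))"
      by (subst BB, rule EE_add)
    also have "EE I (insert k0 S) V A B' = EE I S V A B'"
      using EE_insert[OF insert(1,2)] z T_def by blast
    finally have "EE I (insert k0 S) V A B = EE I S V A B' + qf I A (\<lambda>i. \<Sum>l\<in>insert k0 S. V i l * cnj (w l))"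
      by (simp add: EE_rank1)
    moreover have "0 \<le> Re (EE I S V A B')"
      using insert.IH herm_restrict[OF hB' fT(3)] psd_restrict[OF fT(1) fT(3) pB'] by blast
    moreover have "0 \<le> Re (qf I A (\<lambda>i. \<Sum>l\<in>insert k0 S. V i l * cnj (w l)))"
      using Apsd psd_on_def by blast
    ultimately show ?thesis by simp
  qed
qed



definition kron :: "complex^'n^'n \<Rightarrow> complex^'n^'n \<Rightarrow> complex^('n::finite \<times> 'n::finite)^('n \<times> 'n)" where
  "kron A B = (\<chi> x y. A $ fst x $ fst y * B $ snd x $ snd y)"

lemma mm_nth: "(A ** B) $ i $ j = (\<Sum>k\<in>UNIV. A $ i $ k * B $ k $ j)"
  by (simp add: matrix_matrix_mult_def)

lemma cadj_nth[simp]: "cadj A $ i $ j = cnj (A $ j $ i)"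
  by (simp add: cadj_def)

lemma kron_nth[simp]: "kron A B $ x $ y = A $ fst x $ fst y * B $ snd x $ snd y"
  by (simp add: kron_def)

lemma mat1_nth: "(mat 1 :: 'a::zero_neq_one^'n^'n) $ i $ j = (if i = j then 1 else 0)"
  by (simp add: mat_def)

lemma swap_nth: "swap_op $ x $ z = (if z = prod.swap x then 1 else 0)"
  by (cases x; cases z) (auto simp: swap_op_def)

lemma swap_nth': "swap_op $ z $ x = (if z = prod.swap x then 1 else 0)"
  by (cases x; cases z) (auto simp: swap_op_def)

lemma cadj_mult: "cadj (A ** B) = cadj B ** cadj A"
  by (simp add: vec_eq_iff mm_nth cnj_sum mult.commute)

lemma cadj_cadj[simp]: "cadj (cadj A) = A"
  by (simp add: vec_eq_iff)

lemma sum_pairs: "(\<Sum>x\<in>(UNIV::('a::finite \<times> 'b::finite) set). f x) = (\<Sum>a\<in>UNIV. \<Sum>b\<in>UNIV. f (a, b))"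
  by (simp add: UNIV_Times_UNIV[symmetric] sum.cartesian_product del: UNIV_Times_UNIV)

lemma kron_mult: "kron A B ** kron C D = kron (A ** C) (B ** D)"
  by (simp add: vec_eq_iff mm_nth sum_pairs sum_product mult_ac)

lemma cadj_kron: "cadj (kron A B) = kron (cadj A) (cadj B)"
  by (simp add: vec_eq_iff)

lemma kron_id: "kron (mat 1) (mat 1) = mat 1"
  by (simp add: vec_eq_iff mat1_nth prod_eq_iff)

lemma if01_mult: "(if P then 1 else 0) * (x::complex) = (if P then x else 0)"
  "x * (if P then 1 else 0) = (if P then x else 0)" by auto

lemma pair_swap_eq: "((a, b) = prod.swap k) = (k = (b, a))" by (cases k) auto

lemma swap_kron: "swap_op ** kron A B = kron B A ** swap_op"
  by (simp add: vec_eq_iff mm_nth swap_nth pair_swap_eq if01_mult mult.commute)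


lemma unitary_orth:
  assumes "cadj U ** U = mat 1"
  shows "(\<Sum>k\<in>UNIV. U $ k $ b * cnj (U $ k $ d)) = (if d = b then 1 else 0)"
proof -
  have "(cadj U ** U) $ d $ b = (if d = b then 1 else 0)" using assms by (simp add: mat1_nth)
  then show ?thesis by (simp add: mm_nth mult.commute)
qed

lemma ptrace_B_conj:
  assumes "cadj U ** U = mat 1"
  shows "ptrace_B (kron U U ** r ** cadj (kron U U)) = U ** ptrace_B r ** cadj U"
proof -
  have "ptrace_B (kron U U ** r ** cadj (kron U U)) $ i $ j = (U ** ptrace_B r ** cadj U) $ i $ j" for i j
  proof -
    have "ptrace_B (kron U U ** r ** cadj (kron U U)) $ i $ j
      = (\<Sum>k\<in>UNIV. \<Sum>z\<in>UNIV. \<Sum>y\<in>UNIV. U $ i $ fst y * U $ k $ snd y * r $ y $ z * cnj (U $ j $ fst z * U $ k $ snd z))"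
      by (simp add: ptrace_B_def mm_nth sum_distrib_right)
    also have "\<dots> = (\<Sum>y\<in>UNIV. \<Sum>z\<in>UNIV. U $ i $ fst y * r $ y $ z * cnj (U $ j $ fst z) * (\<Sum>k\<in>UNIV. U $ k $ snd y * cnj (U $ k $ snd z)))"
      apply (subst sum.swap)
      apply (subst (2) sum.swap)
      apply (simp add: sum_distrib_left mult_ac)
      apply (rule sum.cong[OF refl], rule sum.swap)
      done
    also have "\<dots> = (\<Sum>y\<in>UNIV. \<Sum>z\<in>UNIV. if snd z = snd y then U $ i $ fst y * r $ y $ z * cnj (U $ j $ fst z) else 0)"
      by (simp add: unitary_orth[OF assms] if01_mult)
    also have "\<dots> = (\<Sum>a\<in>UNIV. \<Sum>b\<in>UNIV. \<Sum>c\<in>UNIV. U $ i $ a * r $ (a, b) $ (c, b) * cnj (U $ j $ c))"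
      by (simp add: sum_pairs)
    also have "\<dots> = (U ** ptrace_B r ** cadj U) $ i $ j"
      apply (simp add: mm_nth ptrace_B_def sum_distrib_left sum_distrib_right)
      apply (rule trans[OF sum.cong[OF refl sum.swap]])
      apply (rule sum.swap)
      done
    finally show ?thesis .
  qed
  then show ?thesis by (simp add: vec_eq_iff)
qed


lemma sum_if_cond: "(\<Sum>x\<in>A. if P then f x else 0) = (if P then sum f A else 0)" by simp

lemma ptrace_A_conj:
  assumes "cadj U ** U = mat 1"
  shows "ptrace_A (kron U U ** r ** cadj (kron U U)) = U ** ptrace_A r ** cadj U"
proof -
  have "ptrace_A (kron U U ** r ** cadj (kron U U)) $ i $ j = (U ** ptrace_A r ** cadj U) $ i $ j" for i j
  proof -
    have "ptrace_A (kron U U ** r ** cadj (kron U U)) $ i $ j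
      = (\<Sum>k\<in>UNIV. \<Sum>z\<in>UNIV. \<Sum>y\<in>UNIV. U $ k $ fst y * U $ i $ snd y * r $ y $ z * cnj (U $ k $ fst z * U $ j $ snd z))"
      by (simp add: ptrace_A_def mm_nth sum_distrib_right)
    also have "\<dots> = (\<Sum>y\<in>UNIV. \<Sum>z\<in>UNIV. U $ i $ snd y * r $ y $ z * cnj (U $ j $ snd z) * (\<Sum>k\<in>UNIV. U $ k $ fst y * cnj (U $ k $ fst z)))"
      apply (subst sum.swap)
      apply (subst (2) sum.swap)
      apply (simp add: sum_distrib_left mult_ac)
      apply (rule sum.cong[OF refl], rule sum.swap)
      done
    also have "\<dots> = (\<Sum>y\<in>UNIV. \<Sum>z\<in>UNIV. if fst z = fst y then U $ i $ snd y * r $ y $ z * cnj (U $ j $ snd z) else 0)"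
      by (simp add: unitary_orth[OF assms] if01_mult)
    also have "\<dots> = (\<Sum>a\<in>UNIV. \<Sum>b\<in>UNIV. \<Sum>d\<in>UNIV. U $ i $ b * r $ (a, b) $ (a, d) * cnj (U $ j $ d))"
      by (simp add: sum_pairs sum_if_cond)
    also have "\<dots> = (\<Sum>a\<in>UNIV. \<Sum>d\<in>UNIV. \<Sum>b\<in>UNIV. U $ i $ b * r $ (a, b) $ (a, d) * cnj (U $ j $ d))"
      by (rule sum.cong[OF refl sum.swap])
    also have "\<dots> = (\<Sum>d\<in>UNIV. \<Sum>a\<in>UNIV. \<Sum>b\<in>UNIV. U $ i $ b * r $ (a, b) $ (a, d) * cnj (U $ j $ d))"
      by (rule sum.swap)
    also have "\<dots> = (\<Sum>d\<in>UNIV. \<Sum>b\<in>UNIV. \<Sum>a\<in>UNIV. U $ i $ b * r $ (a, b) $ (a, d) * cnj (U $ j $ d))"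
      by (rule sum.cong[OF refl sum.swap])
    also have "\<dots> = (U ** ptrace_A r ** cadj U) $ i $ j"
      by (simp add: mm_nth ptrace_A_def sum_distrib_left sum_distrib_right)
    finally show ?thesis .
  qed
  then show ?thesis by (simp add: vec_eq_iff)
qed


lemma mm_scaleR_right: "A ** (c *\<^sub>R B) = c *\<^sub>R (A ** (B :: complex^'k^'m))"
  by (simp add: vec_eq_iff mm_nth scaleR_sum_right)

lemma mm_scaleR_left: "(c *\<^sub>R A) ** B = c *\<^sub>R (A ** (B :: complex^'k^'m))"
  by (simp add: vec_eq_iff mm_nth scaleR_sum_right)

lemma mm_diff_right: "A ** (B - C) = A ** B - A ** (C :: complex^'k^'m)"
  by (simp add: vec_eq_iff mm_nth algebra_simps sum_subtractf)

lemma mm_diff_left: "(A - B) ** C = A ** C - B ** (C :: complex^'k^'m)"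
  by (simp add: vec_eq_iff mm_nth algebra_simps sum_subtractf)

lemma CQ_eq: "CQ = (1/2::real) *\<^sub>R (mat 1 - swap_op)"
  by (simp add: vec_eq_iff CQ_def) (simp add: scaleR_conv_of_real)

lemma unitary_kron: "cadj U ** U = mat 1 \<Longrightarrow> cadj (kron U U) ** kron U U = mat 1"
  by (simp add: cadj_kron kron_mult kron_id)

lemma CQ_inv:
  assumes "cadj U ** U = mat 1"
  shows "cadj (kron U U) ** CQ ** kron U U = CQ"
proof -
  define W where "W = kron U U"
  have WW: "cadj W ** W = mat 1" using unitary_kron[OF assms] W_def by simp
  have "cadj W ** swap_op ** W = cadj W ** (swap_op ** W)" by (simp add: matrix_mul_assoc)
  also have "swap_op ** W = W ** swap_op" unfolding W_def by (rule swap_kron)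
  also have "cadj W ** (W ** swap_op) = swap_op" by (simp add: matrix_mul_assoc WW)
  finally have S: "cadj W ** swap_op ** W = swap_op" .
  have "cadj W ** CQ ** W = (1/2::real) *\<^sub>R (cadj W ** mat 1 ** W - cadj W ** swap_op ** W)"
    unfolding CQ_eq by (simp add: mm_scaleR_right mm_scaleR_left mm_diff_right mm_diff_left)
  also have "\<dots> = CQ" unfolding S by (simp add: WW CQ_eq)
  finally show ?thesis unfolding W_def .
qed

lemma trace_CQ_conj:
  assumes "cadj U ** U = mat 1"
  shows "trace (CQ ** (kron U U ** r ** cadj (kron U U))) = trace (CQ ** r)"
proof -
  define W where "W = kron U U"
  have "trace (CQ ** (W ** r ** cadj W)) = trace ((CQ ** (W ** r)) ** cadj W)" by (simp add: matrix_mul_assoc)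
  also have "\<dots> = trace (cadj W ** (CQ ** (W ** r)))" by (rule trace_mul_sym)
  also have "\<dots> = trace ((cadj W ** CQ ** W) ** r)" by (simp add: matrix_mul_assoc)
  also have "\<dots> = trace (CQ ** r)" using CQ_inv[OF assms] W_def by simp
  finally show ?thesis unfolding W_def .
qed

lemma trace_conj:
  assumes "cadj U ** U = mat 1"
  shows "trace (kron U U ** r ** cadj (kron U U)) = trace r"
proof -
  define W where "W = kron U U"
  have WW: "cadj W ** W = mat 1" using unitary_kron[OF assms] W_def by simp
  have "trace (W ** r ** cadj W) = trace (cadj W ** (W ** r))" by (rule trace_mul_sym)
  also have "\<dots> = trace r" by (simp add: matrix_mul_assoc WW)
  finally show ?thesis unfolding W_def .
qed

definition qform :: "complex^'n^'n \<Rightarrow> complex^'n \<Rightarrow> complex" where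
  "qform M v = (\<Sum>i\<in>UNIV. cnj (v $ i) * (M *v v) $ i)"

lemma psd_mat_qform: "psd_mat M \<longleftrightarrow> hermitian_mat M \<and> (\<forall>v. 0 \<le> Re (qform M v))"
  by (simp add: psd_mat_def qform_def)

lemma mv_nth: "(M *v v) $ i = (\<Sum>j\<in>UNIV. M $ i $ j * v $ j)"
  by (simp add: matrix_vector_mult_def)

lemma qform_conj:
  fixes A :: "complex^'m^'n" and B :: "complex^'m^'m" and v :: "complex^'n"
  shows "qform (A ** B ** cadj A) v = qform B (cadj A *v v)"
proof -
  have dot: "(\<Sum>i\<in>UNIV. cnj (v $ i) * (A *v w) $ i) = (\<Sum>i\<in>UNIV. cnj ((cadj A *v v) $ i) * w $ i)" for w :: "complex^'m"
  proof -
    have "(\<Sum>i\<in>UNIV. cnj (v $ i) * (A *v w) $ i) = (\<Sum>i\<in>UNIV. \<Sum>j\<in>UNIV. cnj (v $ i) * A $ i $ j * w $ j)"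
      by (simp add: mv_nth sum_distrib_left mult_ac)
    also have "\<dots> = (\<Sum>j\<in>UNIV. \<Sum>i\<in>UNIV. cnj (v $ i) * A $ i $ j * w $ j)" by (rule sum.swap)
    also have "\<dots> = (\<Sum>i\<in>UNIV. cnj ((cadj A *v v) $ i) * w $ i)"
      by (simp add: mv_nth cnj_sum sum_distrib_right sum_distrib_left mult_ac)
    finally show ?thesis .
  qed
  have "qform (A ** B ** cadj A) v = (\<Sum>i\<in>UNIV. cnj (v $ i) * (A *v (B *v (cadj A *v v))) $ i)"
    unfolding qform_def by (simp add: matrix_vector_mul_assoc matrix_mul_assoc)
  also have "\<dots> = qform B (cadj A *v v)" unfolding dot qform_def ..
  finally show ?thesis .
qed


lemma additive_sum:
  fixes f :: "'a::comm_monoid_add \<Rightarrow> 'b::comm_monoid_add"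
  assumes "\<And>x y. f (x + y) = f x + f y" "f 0 = 0"
  shows "f (sum g K) = (\<Sum>i\<in>K. f (g i))"
  by (induct K rule: infinite_finite_induct) (simp_all add: assms)

lemma ptrace_B_add: "ptrace_B (M + N) = ptrace_B M + ptrace_B N"
  by (simp add: ptrace_B_def vec_eq_iff sum.distrib)
lemma ptrace_B_0: "ptrace_B 0 = 0"
  by (simp add: ptrace_B_def vec_eq_iff)
lemma ptrace_B_scaleR: "ptrace_B (c *\<^sub>R M) = c *\<^sub>R ptrace_B M"
  by (simp add: ptrace_B_def vec_eq_iff scaleR_sum_right)
lemma ptrace_A_add: "ptrace_A (M + N) = ptrace_A M + ptrace_A N"
  by (simp add: ptrace_A_def vec_eq_iff sum.distrib)
lemma ptrace_A_0: "ptrace_A 0 = 0"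
  by (simp add: ptrace_A_def vec_eq_iff)
lemma ptrace_A_scaleR: "ptrace_A (c *\<^sub>R M) = c *\<^sub>R ptrace_A M"
  by (simp add: ptrace_A_def vec_eq_iff scaleR_sum_right)
lemma cadj_add: "cadj (M + N) = cadj M + cadj N"
  by (simp add: vec_eq_iff)
lemma cadj_0: "cadj 0 = 0"
  by (simp add: vec_eq_iff)
lemma cscaleR: "c *\<^sub>R (z::complex) = of_real c * z" by (simp add: scaleR_conv_of_real)

lemma cadj_scaleR: "cadj (c *\<^sub>R M) = c *\<^sub>R cadj M"
  by (simp add: vec_eq_iff cscaleR)
lemma trace_zero: "trace (0::complex^'n^'n) = 0"
  by (simp add: trace_def)
lemma trace_scaleR: "trace (c *\<^sub>R (M::complex^'n^'n)) = c *\<^sub>R trace M"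
  by (simp add: trace_def scaleR_sum_right)
lemma mm_zero_right: "A ** (0::complex^'k^'m) = 0"
  by (simp add: vec_eq_iff mm_nth)
lemma qform_add: "qform (M + N) v = qform M v + qform N v"
  by (simp add: qform_def mv_nth algebra_simps sum.distrib)
lemma qform_0: "qform 0 v = 0"
  by (simp add: qform_def mv_nth)
lemma qform_scaleR: "qform (c *\<^sub>R M) v = c *\<^sub>R qform M v"
  by (simp add: qform_def mv_nth scaleR_sum_right cscaleR sum_distrib_left mult_ac)

lemma channel_image:
  fixes rA rB :: "complex^'n^'n" and r :: "complex^('n \<times> 'n)^('n \<times> 'n)"
  assumes pU: "\<forall>i<k. 0 \<le> p i \<and> unitary_mat (U i)" and ps: "(\<Sum>i<k. p i) = 1"
    and r: "r \<in> GammaQ rA rB"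
  defines "r' \<equiv> (\<Sum>i<k. p i *\<^sub>R (kron (U i) (U i) ** r ** cadj (kron (U i) (U i))))"
  shows "r' \<in> GammaQ (\<Sum>i<k. p i *\<^sub>R (U i ** rA ** cadj (U i))) (\<Sum>i<k. p i *\<^sub>R (U i ** rB ** cadj (U i)))"
    and "trace (CQ ** r') = trace (CQ ** r)"
proof -
  have uu: "cadj (U i) ** U i = mat 1" if "i < k" for i using pU that unitary_mat_def by blast
  have dr: "density_mat r" "ptrace_B r = rA" "ptrace_A r = rB" using r GammaQ_def by auto
  have hr: "cadj r = r" using dr(1) density_mat_def psd_mat_def hermitian_mat_def by blast
  have "ptrace_B r' = (\<Sum>i<k. p i *\<^sub>R ptrace_B (kron (U i) (U i) ** r ** cadj (kron (U i) (U i))))"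
    unfolding r'_def by (subst additive_sum[of ptrace_B], simp_all add: ptrace_B_add ptrace_B_0 ptrace_B_scaleR)
  also have "\<dots> = (\<Sum>i<k. p i *\<^sub>R (U i ** rA ** cadj (U i)))"
    using ptrace_B_conj[OF uu] dr(2) by (intro sum.cong) auto
  finally have pB: "ptrace_B r' = (\<Sum>i<k. p i *\<^sub>R (U i ** rA ** cadj (U i)))" .
  have "ptrace_A r' = (\<Sum>i<k. p i *\<^sub>R ptrace_A (kron (U i) (U i) ** r ** cadj (kron (U i) (U i))))"
    unfolding r'_def by (subst additive_sum[of ptrace_A], simp_all add: ptrace_A_add ptrace_A_0 ptrace_A_scaleR)
  also have "\<dots> = (\<Sum>i<k. p i *\<^sub>R (U i ** rB ** cadj (U i)))"
    using ptrace_A_conj[OF uu] dr(3) by (intro sum.cong) auto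
  finally have pA: "ptrace_A r' = (\<Sum>i<k. p i *\<^sub>R (U i ** rB ** cadj (U i)))" .
  have "cadj r' = (\<Sum>i<k. p i *\<^sub>R cadj (kron (U i) (U i) ** r ** cadj (kron (U i) (U i))))"
    unfolding r'_def by (subst additive_sum[of cadj], simp_all add: cadj_add cadj_0 cadj_scaleR)
  also have "\<dots> = r'"
    unfolding r'_def by (intro sum.cong refl) (simp add: cadj_mult hr matrix_mul_assoc)
  finally have h': "hermitian_mat r'" unfolding hermitian_mat_def .
  have q': "0 \<le> Re (qform r' v)" for v
  proof -
    have "qform r' v = (\<Sum>i<k. p i *\<^sub>R qform (kron (U i) (U i) ** r ** cadj (kron (U i) (U i))) v)"
      unfolding r'_def by (subst additive_sum[of "\<lambda>M. qform M v"], simp_all add: qform_add qform_0 qform_scaleR)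
    then have "Re (qform r' v) = (\<Sum>i<k. p i * Re (qform r (cadj (kron (U i) (U i)) *v v)))"
      by (simp add: qform_conj)
    also have "\<dots> \<ge> 0"
      using pU dr(1) unfolding density_mat_def psd_mat_qform by (intro sum_nonneg mult_nonneg_nonneg) auto
    finally show ?thesis .
  qed
  have "trace r' = (\<Sum>i<k. p i *\<^sub>R trace (kron (U i) (U i) ** r ** cadj (kron (U i) (U i))))"
    unfolding r'_def by (subst additive_sum[of trace], simp_all add: trace_add trace_zero trace_scaleR)
  also have "\<dots> = (\<Sum>i<k. p i *\<^sub>R trace r)"
    using trace_conj[OF uu] by (intro sum.cong) auto
  also have "\<dots> = 1" using dr(1) ps unfolding density_mat_def by (simp add: scaleR_sum_left[symmetric])
  finally have t': "trace r' = 1" .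
  show "r' \<in> GammaQ (\<Sum>i<k. p i *\<^sub>R (U i ** rA ** cadj (U i))) (\<Sum>i<k. p i *\<^sub>R (U i ** rB ** cadj (U i)))"
    unfolding GammaQ_def density_mat_def psd_mat_qform using pA pB h' q' t' by auto
  have "trace (CQ ** r') = (\<Sum>i<k. p i *\<^sub>R trace (CQ ** (kron (U i) (U i) ** r ** cadj (kron (U i) (U i)))))"
    unfolding r'_def by (subst additive_sum[of "\<lambda>M. trace (CQ ** M)"], simp_all add: matrix_add_ldistrib trace_add mm_zero_right trace_zero mm_scaleR_right trace_scaleR)
  also have "\<dots> = (\<Sum>i<k. p i *\<^sub>R trace (CQ ** r))"
    using trace_CQ_conj[OF uu] by (intro sum.cong) auto
  also have "\<dots> = trace (CQ ** r)" using ps by (simp add: scaleR_sum_left[symmetric])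
  finally show "trace (CQ ** r') = trace (CQ ** r)" .
qed


lemma swap_swap: "swap_op ** swap_op = mat 1"
  by (simp add: vec_eq_iff mm_nth swap_nth' pair_swap_eq mat1_nth if01_mult)

lemma CQ_idem: "CQ ** CQ = CQ"
proof -
  let ?X = "mat 1 - swap_op :: complex^('n::finite \<times> 'n::finite)^('n \<times> 'n)"
  have "?X ** ?X = mat 1 - swap_op - (swap_op - mat 1)"
    by (simp add: mm_diff_left mm_diff_right swap_swap)
  also have "\<dots> = 2 *\<^sub>R ?X" by (simp add: vec_eq_iff cscaleR algebra_simps)
  finally have XX: "?X ** ?X = 2 *\<^sub>R ?X" .
  show ?thesis unfolding CQ_eq mm_scaleR_left mm_scaleR_right XX scaleR_scaleR by simp
qed

lemma CQ_nth: "CQ $ x $ y = ((if x = y then 1 else 0) - (if y = prod.swap x then 1 else 0)) / 2"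
  by (simp add: CQ_def mat1_nth swap_nth)

lemma CQ_sym: "CQ $ y $ x = CQ $ x $ y"
proof -
  have e: "(y = prod.swap x) = (x = prod.swap y)" by (cases x; cases y) auto
  show ?thesis unfolding CQ_nth e by (simp add: eq_commute[of x y])
qed

lemma CQ_cnj: "cnj (CQ $ x $ y) = CQ $ x $ y"
  unfolding CQ_nth by (simp split: if_split)

lemma id_psd: "finite I \<Longrightarrow> psd_on I (\<lambda>i j. if i = j then 1 else 0)"
  unfolding psd_on_def qf_def
proof
  fix v :: "'a \<Rightarrow> complex"
  assume fI: "finite I"
  have "(\<Sum>k\<in>I. \<Sum>l\<in>I. cnj (v k) * (if k = l then 1 else 0) * v l) = (\<Sum>k\<in>I. if k \<in> I then cnj (v k) * v k else 0)"
  proof (intro sum.cong refl)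
    fix k assume "k \<in> I"
    have "\<And>l. cnj (v k) * (if k = l then 1 else 0) * v l = (if l = k then cnj (v k) * v k else 0)" by simp
    then show "(\<Sum>l\<in>I. cnj (v k) * (if k = l then 1 else 0) * v l) = (if k \<in> I then cnj (v k) * v k else 0)"
      using fI by (simp add: sum.delta')
  qed
  also have "\<dots> = (\<Sum>k\<in>I. complex_of_real ((cmod (v k))^2))"
    by (intro sum.cong refl) (subst complex_norm_square, simp add: mult.commute)
  finally show "0 \<le> Re (\<Sum>k\<in>I. \<Sum>l\<in>I. cnj (v k) * (if k = l then 1 else 0) * v l)" by (simp add: sum_nonneg)
qed

lemma herm_mat_on: "hermitian_mat M \<Longrightarrow> herm_on UNIV (\<lambda>i j. M $ i $ j)"
  unfolding hermitian_mat_def herm_on_def by (metis cadj_nth)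

lemma psd_mat_on: "psd_mat M \<Longrightarrow> psd_on UNIV (\<lambda>i j. M $ i $ j)"
  unfolding psd_on_def
proof
  fix v :: "'a \<Rightarrow> complex"
  assume "psd_mat M"
  then have "0 \<le> Re (qform M (vec_lambda v))" using psd_mat_qform by blast
  also have "qform M (vec_lambda v) = qf UNIV (\<lambda>i j. M $ i $ j) v"
    by (simp add: qform_def qf_def mv_nth sum_distrib_left mult_ac)
  finally show "0 \<le> Re (qf UNIV (\<lambda>i j. M $ i $ j) v)" .
qed

lemma CQ_lower:
  fixes r :: "complex^('n::finite \<times> 'n::finite)^('n \<times> 'n)"
  assumes "density_mat r"
  shows "0 \<le> Re (trace (CQ ** r))"
proof -
  have hr: "herm_on UNIV (\<lambda>i j. r $ i $ j)" "psd_on UNIV (\<lambda>i j. r $ i $ j)"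
    using assms herm_mat_on psd_mat_on unfolding density_mat_def psd_mat_def by blast+
  have "0 \<le> Re (EE UNIV UNIV (\<lambda>i k. CQ $ i $ k) (\<lambda>i j. if i = j then 1 else 0) (\<lambda>i j. r $ i $ j))"
    by (rule tensor_aux[OF finite id_psd[OF finite] finite hr])
  also have "EE UNIV UNIV (\<lambda>i k. CQ $ i $ k) (\<lambda>i j. if i = j then 1 else 0) (\<lambda>i j. r $ i $ j)
     = (\<Sum>i\<in>UNIV. \<Sum>k\<in>UNIV. \<Sum>l\<in>UNIV. CQ $ i $ k * r $ k $ l * CQ $ i $ l)"
  proof -
    have "\<And>i j k l. CQ $ i $ k * (if i = j then 1 else 0) * r $ k $ l * CQ $ j $ l = (if j = i then CQ $ i $ k * r $ k $ l * CQ $ i $ l else 0)" by simp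
    then show ?thesis unfolding EE_def CQ_cnj by (simp add: sum_if_cond)
  qed
  also have "\<dots> = (\<Sum>k\<in>UNIV. \<Sum>l\<in>UNIV. \<Sum>i\<in>UNIV. CQ $ i $ k * r $ k $ l * CQ $ i $ l)"
    by (rule trans[OF sum.swap sum.cong[OF refl sum.swap]])
  also have "\<dots> = (\<Sum>k\<in>UNIV. \<Sum>l\<in>UNIV. (CQ ** CQ) $ l $ k * r $ k $ l)"
  proof -
    have e: "(CQ ** CQ) $ l $ k = (\<Sum>i\<in>UNIV. CQ $ i $ k * CQ $ i $ l)" for k l
      unfolding mm_nth by (intro sum.cong refl) (metis CQ_sym mult.commute)
    show ?thesis unfolding e by (simp add: sum_distrib_left mult_ac)
  qed
  also have "\<dots> = trace (CQ ** r)"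
    unfolding CQ_idem trace_def mm_nth by (rule sum.swap)
  finally show ?thesis .
qed


lemma kron_in_Gamma:
  fixes rA rB :: "complex^'n^'n"
  assumes dA: "density_mat rA" and dB: "density_mat rB"
  shows "kron rA rB \<in> GammaQ rA rB"
proof -
  have hA: "cadj rA = rA" and hB: "cadj rB = rB"
    using dA dB unfolding density_mat_def psd_mat_def hermitian_mat_def by auto
  have tA: "trace rA = 1" and tB: "trace rB = 1" using dA dB density_mat_def by auto
  have herm: "hermitian_mat (kron rA rB)" unfolding hermitian_mat_def cadj_kron hA hB ..
  have q: "0 \<le> Re (qform (kron rA rB) v)" for v
  proof -
    have pA: "psd_on UNIV (\<lambda>i j. rA $ i $ j)" using dA psd_mat_on density_mat_def by blast
    have hB': "herm_on UNIV (\<lambda>i j. rB $ i $ j)" "psd_on UNIV (\<lambda>i j. rB $ i $ j)"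
      using dB herm_mat_on psd_mat_on unfolding density_mat_def psd_mat_def by blast+
    have "0 \<le> Re (EE UNIV UNIV (\<lambda>i k. v $ (i, k)) (\<lambda>i j. rA $ i $ j) (\<lambda>i j. rB $ i $ j))"
      by (rule tensor_aux[OF finite pA finite hB'])
    also have "EE UNIV UNIV (\<lambda>i k. v $ (i, k)) (\<lambda>i j. rA $ i $ j) (\<lambda>i j. rB $ i $ j) = qform (kron rA rB) v"
    proof -
      have "qform (kron rA rB) v = (\<Sum>i\<in>UNIV. \<Sum>k\<in>UNIV. \<Sum>j\<in>UNIV. \<Sum>l\<in>UNIV. cnj (v $ (i, k)) * rA $ i $ j * rB $ k $ l * v $ (j, l))"
        by (simp add: qform_def mv_nth sum_pairs sum_distrib_left mult_ac)
      also have "\<dots> = EE UNIV UNIV (\<lambda>i k. v $ (i, k)) (\<lambda>i j. rA $ i $ j) (\<lambda>i j. rB $ i $ j)"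
        unfolding EE_def by (rule sum.cong[OF refl sum.swap])
      finally show ?thesis by simp
    qed
    finally show ?thesis .
  qed
  have tr: "trace (kron rA rB) = 1"
  proof -
    have "trace (kron rA rB) = trace rA * trace rB" by (simp add: trace_def sum_pairs sum_product)
    then show ?thesis using tA tB by simp
  qed
  have pB: "ptrace_B (kron rA rB) = rA"
  proof -
    have "ptrace_B (kron rA rB) $ i $ j = rA $ i $ j" for i j
      using tB by (simp add: ptrace_B_def trace_def sum_distrib_left[symmetric])
    then show ?thesis by (simp add: vec_eq_iff)
  qed
  have pA: "ptrace_A (kron rA rB) = rB"
  proof -
    have "ptrace_A (kron rA rB) $ i $ j = rB $ i $ j" for i j
      using tA by (simp add: ptrace_A_def trace_def sum_distrib_right[symmetric])
    then show ?thesis by (simp add: vec_eq_iff)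
  qed
  show ?thesis unfolding GammaQ_def density_mat_def psd_mat_qform using herm q tr pA pB by auto
qed

theorem proposition4p1:
  fixes \<Psi> :: "complex^'n^'n \<Rightarrow> complex^'n^'n" and rA rB :: "complex^'n^'n"
  assumes "mixed_unitary_channel \<Psi>"
    and "density_mat rA" and "density_mat rB"
  shows "TQ (\<Psi> rA) (\<Psi> rB) \<le> TQ rA rB"
proof -
  obtain k :: nat and p U where H: "(\<forall>i<k. 0 \<le> p i \<and> unitary_mat (U i)) \<and> (\<Sum>i<k. p i) = 1 \<and>
        (\<forall>\<rho>. \<Psi> \<rho> = (\<Sum>i<k. p i *\<^sub>R (U i ** \<rho> ** cadj (U i))))"
    using assms(1) unfolding mixed_unitary_channel_def apply (elim exE)
    apply (drule meta_spec)+
    apply (erule meta_mp)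
    apply assumption
    done
  have pU: "\<forall>i<k. 0 \<le> p i \<and> unitary_mat (U i)" and ps: "(\<Sum>i<k. p i) = 1"
    and Psi: "\<And>\<rho>. \<Psi> \<rho> = (\<Sum>i<k. p i *\<^sub>R (U i ** \<rho> ** cadj (U i)))"
    using H by simp_all
  let ?f = "\<lambda>r. Re (trace (CQ ** r))"
  have sub: "?f ` GammaQ rA rB \<subseteq> ?f ` GammaQ (\<Psi> rA) (\<Psi> rB)"
  proof
    fix x assume "x \<in> ?f ` GammaQ rA rB"
    then obtain r where r: "r \<in> GammaQ rA rB" and x: "x = ?f r" by blast
    note ci = channel_image[OF pU ps r]
    show "x \<in> ?f ` GammaQ (\<Psi> rA) (\<Psi> rB)"
      unfolding Psi x using ci by (intro image_eqI[where x="(\<Sum>i<k. p i *\<^sub>R (kron (U i) (U i) ** r ** cadj (kron (U i) (U i))))"]) auto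
  qed
  have mem: "?f (kron rA rB) \<in> ?f ` GammaQ rA rB" using kron_in_Gamma[OF assms(2,3)] by (rule imageI)
  have ne: "?f ` GammaQ rA rB \<noteq> {}"
  proof
    assume "?f ` GammaQ rA rB = {}"
    with mem show False by simp
  qed
  have bdd: "bdd_below (?f ` GammaQ (\<Psi> rA) (\<Psi> rB))"
  proof (rule bdd_belowI[of _ 0])
    fix x assume "x \<in> ?f ` GammaQ (\<Psi> rA) (\<Psi> rB)"
    then obtain r where r: "r \<in> GammaQ (\<Psi> rA) (\<Psi> rB)" and x: "x = ?f r" by (rule imageE)
    have "density_mat r" using r unfolding GammaQ_def by simp
    then show "0 \<le> x" unfolding x by (rule CQ_lower)
  qed
  show ?thesis unfolding TQ_def by (rule cInf_superset_mono[OF ne bdd sub])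
qed

end
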